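(* Let $n\ge1$, $Q$ a real symmetric positive definite $n\times n$ matrix and $B$ a real $n\times n$ matrix all of whose eigenvalues have negative real parts. There is a constant $C=C(n,Q,B)$ such that for all $(x,u)\in\mathbb R^n\times\mathbb R^n$ with $|x-u|>1/(1+|x|)$ and all $0<t\le1$, $$K_t^{UO}(x,u)\le C\,e^{-R(x)}(1+|x|)^n.$$
   Context: $Q_t=\int_0^te^{sB}Qe^{sB^*}ds$ ($t\in(0,\infty]$), $R(x)=\frac12\langle Q_\infty^{-1}x,x\rangle$, $D_t=Q_\infty e^{-tB^*}Q_\infty^{-1}$, and for $t>0$ $K_t^{UO}(x,u)=(2\pi)^{-n}(\det Q_\infty\det Q_t)^{-1/2}e^{t\,\mathrm{tr}B}e^{-R(x)}\exp[-\frac12\langle (Q_t^{-1}-Q_\infty^{-1})(x-D_tu),x-D_tu\rangle]$. *)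

theory Defs
  imports "HOL-Analysis.Analysis"
begin

fun mpow :: "real^'n^'n \<Rightarrow> nat \<Rightarrow> real^'n^'n" where
  "mpow A 0 = mat 1"
| "mpow A (Suc k) = A ** mpow A k"

definition mexp :: "real^'n^'n \<Rightarrow> real^'n^'n" where
  "mexp A = (\<Sum>k. inverse (fact k) *\<^sub>R mpow A k)"

definition complex_eigenvalue :: "real^'n^'n \<Rightarrow> complex \<Rightarrow> bool" where
  "complex_eigenvalue B z \<longleftrightarrow>
     det (mat z - (\<chi> i j. complex_of_real (B $ i $ j)) :: complex^'n^'n) = 0"

definition sym_pos_def_mat :: "real^'n^'n \<Rightarrow> bool" where
  "sym_pos_def_mat Q \<longleftrightarrow> transpose Q = Q \<and> (\<forall>x. x \<noteq> 0 \<longrightarrow> x \<bullet> (Q *v x) > 0)"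

definition Qt :: "real^'n^'n \<Rightarrow> real^'n^'n \<Rightarrow> real \<Rightarrow> real^'n^'n" where
  "Qt B Q t = integral {0..t} (\<lambda>s. mexp (s *\<^sub>R B) ** Q ** transpose (mexp (s *\<^sub>R B)))"

definition Qinf :: "real^'n^'n \<Rightarrow> real^'n^'n \<Rightarrow> real^'n^'n" where
  "Qinf B Q = integral {0..} (\<lambda>s. mexp (s *\<^sub>R B) ** Q ** transpose (mexp (s *\<^sub>R B)))"

definition Rfun :: "real^'n^'n \<Rightarrow> real^'n^'n \<Rightarrow> real^'n \<Rightarrow> real" where
  "Rfun B Q x = 1/2 * ((matrix_inv (Qinf B Q) *v x) \<bullet> x)"

definition Dt :: "real^'n^'n \<Rightarrow> real^'n^'n \<Rightarrow> real \<Rightarrow> real^'n^'n" where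
  "Dt B Q t = Qinf B Q ** mexp ((- t) *\<^sub>R transpose B) ** matrix_inv (Qinf B Q)"

definition KUO :: "real^'n^'n \<Rightarrow> real^'n^'n \<Rightarrow> real \<Rightarrow> real^'n \<Rightarrow> real^'n \<Rightarrow> real" where
  "KUO B Q t x u =
     inverse ((2 * pi) ^ CARD('n)) * inverse (sqrt (det (Qinf B Q) * det (Qt B Q t)))
     * exp (t * trace B) * exp (- Rfun B Q x)
     * exp (- 1/2 * (((matrix_inv (Qt B Q t) - matrix_inv (Qinf B Q)) *v (x - Dt B Q t *v u))
                      \<bullet> (x - Dt B Q t *v u)))"

end

theory Submission
  imports Defs
begin
lemma sq_norm_vec: "(norm (y::real^'n))^2 = (\<Sum>i\<in>UNIV. (y$i)^2)"
  by (simp add: norm_vec_def L2_set_def sum_nonneg)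

lemma mv_row: "((A::real^'n^'m) *v x) $ i = A$i \<bullet> x"
  by (simp add: matrix_vector_mult_def inner_vec_def mult.commute)

lemma sq_norm_mat: "(norm (A::real^'n^'m))^2 = (\<Sum>i\<in>UNIV. (norm (A$i))^2)"
  by (simp add: norm_vec_def L2_set_def sum_nonneg)

lemma norm_mv: "norm ((A::real^'n^'m) *v x) \<le> norm A * norm x"
proof -
  have "(norm (A *v x))^2 = (\<Sum>i\<in>UNIV. (A$i \<bullet> x)^2)" by (simp add: sq_norm_vec mv_row)
  also have "\<dots> \<le> (\<Sum>i\<in>UNIV. (norm (A$i))^2 * (norm x)^2)"
  proof (rule sum_mono)
    fix i
    have "\<bar>A$i \<bullet> x\<bar> \<le> norm (A$i) * norm x" by (rule Cauchy_Schwarz_ineq2)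
    then have "\<bar>A$i \<bullet> x\<bar>^2 \<le> (norm (A$i) * norm x)^2"
      by (meson abs_ge_zero power_mono)
    then show "(A$i \<bullet> x)^2 \<le> (norm (A$i))^2 * (norm x)^2" by (simp add: power_mult_distrib)
  qed
  also have "\<dots> = (norm A * norm x)^2" by (simp add: sq_norm_mat sum_distrib_right power_mult_distrib)
  finally show ?thesis using power2_le_imp_le by (metis mult_nonneg_nonneg norm_ge_zero)
qed

lemma norm_transpose: "norm (transpose (A::real^'n^'m)) = norm A"
proof -
  have "(norm (transpose A))^2 = (norm A)^2"
    unfolding sq_norm_mat sq_norm_vec transpose_def
    by (simp, rule sum.swap)
  then show ?thesis by (simp add: power2_eq_iff_nonneg)
qed

lemma norm_vm: "norm (x v* (A::real^'n^'m)) \<le> norm x * norm A"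
  using norm_mv[of "transpose A" x] by (simp add: norm_transpose mult.commute)

lemma row_mm: "((A::real^'n^'m) ** B) $ i = (A$i) v* B"
  by (simp add: matrix_matrix_mult_def vector_matrix_mult_def vec_eq_iff mult.commute)

lemma norm_mm: "norm ((A::real^'n^'m) ** (B::real^'k^'n)) \<le> norm A * norm B"
proof -
  have "(norm (A ** B))^2 = (\<Sum>i\<in>UNIV. (norm ((A$i) v* B))^2)" by (simp add: sq_norm_mat row_mm)
  also have "\<dots> \<le> (\<Sum>i\<in>UNIV. (norm (A$i))^2 * (norm B)^2)"
  proof (rule sum_mono)
    fix i
    have "norm ((A$i) v* B) \<le> norm (A$i) * norm B" by (rule norm_vm)
    then show "(norm ((A$i) v* B))^2 \<le> (norm (A$i))^2 * (norm B)^2"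
      by (metis norm_ge_zero power_mono power_mult_distrib)
  qed
  also have "\<dots> = (norm A * norm B)^2" by (simp add: sq_norm_mat sum_distrib_right power_mult_distrib)
  finally show ?thesis using power2_le_imp_le by (metis mult_nonneg_nonneg norm_ge_zero)
qed


lemma mpow_norm: "norm (mpow (A::real^'n^'n) k) \<le> norm (mat 1 :: real^'n^'n) * norm A ^ k"
proof (induction k)
  case 0 then show ?case by simp
next
  case (Suc k)
  have "norm (mpow A (Suc k)) \<le> norm A * norm (mpow A k)" by (simp add: norm_mm)
  also have "\<dots> \<le> norm A * (norm (mat 1 :: real^'n^'n) * norm A ^ k)"
    by (rule mult_left_mono[OF Suc.IH norm_ge_zero])
  finally show ?case by (simp add: algebra_simps)
qed

lemma mterm_norm: "norm (inverse (fact k) *\<^sub>R mpow (A::real^'n^'n) k) \<le> norm (mat 1 :: real^'n^'n) * (norm A ^ k / fact k)"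
proof -
  have "norm (inverse (fact k) *\<^sub>R mpow A k) = norm (mpow A k) / fact k" by (simp add: divide_inverse mult.commute)
  also have "\<dots> \<le> norm (mat 1 :: real^'n^'n) * norm A ^ k / fact k"
    by (rule divide_right_mono[OF mpow_norm]) simp
  finally show ?thesis by simp
qed

lemma summable_expbound: "summable (\<lambda>k. c * ((a::real) ^ k / fact k))"
proof -
  have "summable (\<lambda>k. a ^ k / fact k)" using exp_converges[of a] by (simp add: sums_summable divide_inverse mult.commute sums_iff)
  then show ?thesis by (rule summable_mult)
qed

lemma summable_mterm: "summable (\<lambda>k. inverse (fact k) *\<^sub>R mpow (A::real^'n^'n) k)"
  by (rule summable_comparison_test'[OF summable_expbound mterm_norm])

lemma summable_norm_mterm: "summable (\<lambda>k. norm (inverse (fact k) *\<^sub>R mpow (A::real^'n^'n) k))"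
proof (rule summable_comparison_test'[OF summable_expbound[of "norm (mat 1 :: real^'n^'n)" "norm A"]])
  fix k :: nat
  show "norm (norm (inverse (fact k) *\<^sub>R mpow (A::real^'n^'n) k)) \<le> norm (mat 1 :: real^'n^'n) * (norm A ^ k / fact k)"
    using mterm_norm[of k A] by simp
qed

lemma mexp_sub_I: "norm (mexp (A::real^'n^'n) - mat 1) \<le> norm (mat 1 :: real^'n^'n) * (exp (norm A) - 1)"
proof -
  let ?T = "\<lambda>k. inverse (fact k) *\<^sub>R mpow (A::real^'n^'n) k"
  let ?N = "norm (mat 1 :: real^'n^'n)"
  have e: "mexp A - mat 1 = (\<Sum>k. ?T (Suc k))"
    unfolding mexp_def using suminf_split_head[OF summable_mterm[of A]] by simp
  have s1: "summable (\<lambda>k. norm (?T (Suc k)))"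
    using summable_norm_mterm[of A] by (subst summable_Suc_iff)
  have sg: "(\<lambda>k. ?N * (norm A ^ Suc k / fact (Suc k))) sums (?N * (exp (norm A) - 1))"
  proof -
    have "(\<lambda>k. norm A ^ k / fact k) sums exp (norm A)" using exp_converges[of "norm A"] by (simp add: divide_inverse mult.commute)
    then have "(\<lambda>k. norm A ^ Suc k / fact (Suc k)) sums (exp (norm A) - 1)"
      by (subst sums_Suc_iff) simp
    then show ?thesis by (rule sums_mult)
  qed
  have "norm (mexp A - mat 1) \<le> (\<Sum>k. norm (?T (Suc k)))" unfolding e by (rule summable_norm[OF s1])
  also have "\<dots> \<le> (\<Sum>k. ?N * (norm A ^ Suc k / fact (Suc k)))"
    by (rule suminf_le[OF mterm_norm s1 sums_summable[OF sg]])
  also have "\<dots> = ?N * (exp (norm A) - 1)" using sg by (simp add: sums_iff)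
  finally show ?thesis .
qed

lemma mexp_norm: "norm (mexp (A::real^'n^'n)) \<le> norm (mat 1 :: real^'n^'n) * exp (norm A)"
proof -
  have "norm (mexp A) \<le> norm (mexp A - mat 1) + norm (mat 1 :: real^'n^'n)" using norm_triangle_ineq[of "mexp A - mat 1" "mat 1 :: real^'n^'n"] by simp
  also have "\<dots> \<le> norm (mat 1 :: real^'n^'n) * (exp (norm A) - 1) + norm (mat 1 :: real^'n^'n)"
    using mexp_sub_I[of A] by simp
  finally show ?thesis by (simp add: algebra_simps)
qed

lemma exp_sub1_le: "0 \<le> (a::real) \<Longrightarrow> exp a - 1 \<le> a * exp a"
proof -
  assume a: "0 \<le> a"
  have "exp (-a) \<ge> 1 + (-a)" by (rule exp_ge_add_one_self)
  then have "exp a * exp (-a) \<ge> exp a * (1 - a)" by (simp add: mult_left_mono)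
  then show ?thesis by (simp add: exp_minus algebra_simps)
qed

lemma dot_mv_tr: "(x::real^'m) \<bullet> ((A::real^'n^'m) *v y) = (transpose A *v x) \<bullet> y"
  by (simp add: dot_lmul_matrix)

lemma mat_inv: "invertible (A::real^'n^'n) \<Longrightarrow> A ** matrix_inv A = mat 1 \<and> matrix_inv A ** A = mat 1"
  unfolding invertible_def matrix_inv_def by (rule someI_ex)

lemma pd_inj:
  assumes "\<forall>x. x \<noteq> 0 \<longrightarrow> 0 < x \<bullet> ((A::real^'n^'n) *v x)"
  shows "inj ((*v) A)"
proof (rule injI)
  fix x y assume "A *v x = A *v y"
  then have "A *v (x - y) = 0" by (simp add: matrix_vector_mult_diff_distrib)
  then show "x = y" using assms[rule_format, of "x - y"] by auto
qed

lemma pd_det_nz: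
  assumes "\<forall>x. x \<noteq> 0 \<longrightarrow> 0 < x \<bullet> ((A::real^'n^'n) *v x)"
  shows "det A \<noteq> 0"
  using det_nz_iff_inj[of "\<lambda>x. A *v x"] pd_inj[OF assms] by simp

lemma pd_invertible:
  assumes "\<forall>x. x \<noteq> 0 \<longrightarrow> 0 < x \<bullet> ((A::real^'n^'n) *v x)"
  shows "invertible A"
  using pd_det_nz[OF assms] invertible_det_nz by blast

lemma det_cont: "continuous_on S g \<Longrightarrow> continuous_on S (\<lambda>s. det (g s :: real^'n^'n))"
  unfolding det_def by (intro continuous_intros)

lemma pd_det_pos:
  assumes pd: "\<forall>x. x \<noteq> 0 \<longrightarrow> 0 < x \<bullet> ((A::real^'n^'n) *v x)"
  shows "det A > 0"
proof (rule ccontr)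
  assume "\<not> det A > 0"
  define h where "h s = det (s *\<^sub>R A + (1 - s) *\<^sub>R mat 1)" for s :: real
  have c: "continuous_on {0..1} h" unfolding h_def by (intro det_cont continuous_intros)
  have "h 1 \<le> 0" "0 \<le> h 0" using \<open>\<not> det A > 0\<close> by (auto simp: h_def)
  then obtain s where s: "0 \<le> s" "s \<le> 1" "h s = 0" using IVT2'[of h 1 0 0, OF _ _ _ c] by auto
  have "\<forall>x. x \<noteq> 0 \<longrightarrow> 0 < x \<bullet> ((s *\<^sub>R A + (1 - s) *\<^sub>R mat 1) *v x)"
  proof (intro allI impI)
    fix x :: "real^'n" assume x: "x \<noteq> 0"
    have e: "x \<bullet> ((s *\<^sub>R A + (1 - s) *\<^sub>R mat 1) *v x) = s * (x \<bullet> (A *v x)) + (1 - s) * (x \<bullet> x)"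
      by (simp add: matrix_vector_mult_add_rdistrib scaleR_matrix_vector_assoc[symmetric] inner_add_right)
    have "0 < x \<bullet> (A *v x)" using pd x by auto
    moreover have "0 < x \<bullet> x" using x by simp
    ultimately show "0 < x \<bullet> ((s *\<^sub>R A + (1 - s) *\<^sub>R mat 1) *v x)"
      unfolding e using s(1,2)
      by (cases "s = 0") (auto intro: add_pos_nonneg add_nonneg_pos)
  qed
  from pd_det_nz[OF this] s(3) show False by (simp add: h_def)
qed

lemma inv_quad_ge:
  fixes A :: "real^'n^'n"
  assumes sym: "transpose A = A" and inv: "invertible A" and psd: "\<forall>z. 0 \<le> z \<bullet> (A *v z)"
  shows "2 * (z \<bullet> y) - z \<bullet> (A *v z) \<le> y \<bullet> (matrix_inv A *v y)"
proof -
  define w where "w = matrix_inv A *v y"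
  have Aw: "A *v w = y" unfolding w_def using mat_inv[OF inv] by (simp add: matrix_vector_mul_assoc)
  have "0 \<le> (z - w) \<bullet> (A *v (z - w))" using psd by blast
  also have "\<dots> = z \<bullet> (A *v z) - z \<bullet> (A *v w) - w \<bullet> (A *v z) + w \<bullet> (A *v w)"
    by (simp add: matrix_vector_mult_diff_distrib inner_diff_left inner_diff_right)
  also have "w \<bullet> (A *v z) = z \<bullet> (A *v w)"
    using dot_mv_tr[of w A z] sym by (simp add: inner_commute)
  finally have "0 \<le> z \<bullet> (A *v z) - 2 * (z \<bullet> y) + w \<bullet> y" using Aw by simp
  then show ?thesis by (simp add: w_def inner_commute)
qed

lemma inv_mono:
  fixes A B :: "real^'n^'n"
  assumes symA: "transpose A = A" and invA: "invertible A" and psdA: "\<forall>z. 0 \<le> z \<bullet> (A *v z)"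
    and invB: "invertible B" and le: "\<forall>z. z \<bullet> (A *v z) \<le> z \<bullet> (B *v z)"
  shows "y \<bullet> (matrix_inv B *v y) \<le> y \<bullet> (matrix_inv A *v y)"
proof -
  define w where "w = matrix_inv B *v y"
  have Bw: "B *v w = y" unfolding w_def using mat_inv[OF invB] by (simp add: matrix_vector_mul_assoc)
  have "y \<bullet> (matrix_inv B *v y) = 2 * (w \<bullet> y) - w \<bullet> (B *v w)" using Bw by (simp add: w_def inner_commute)
  also have "\<dots> \<le> 2 * (w \<bullet> y) - w \<bullet> (A *v w)" using le by (simp add: algebra_simps)
  also have "\<dots> \<le> y \<bullet> (matrix_inv A *v y)" by (rule inv_quad_ge[OF symA invA psdA])
  finally show ?thesis .
qed

lemma inv_lower:
  fixes A :: "real^'n^'n"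
  assumes sym: "transpose A = A" and inv: "invertible A" and psd: "\<forall>z. 0 \<le> z \<bullet> (A *v z)"
    and k: "k > 0" and up: "\<forall>z. z \<bullet> (A *v z) \<le> k * (norm z)^2"
  shows "(norm y)^2 / k \<le> y \<bullet> (matrix_inv A *v y)"
proof -
  let ?z = "(1/k) *\<^sub>R y"
  have "?z \<bullet> (A *v ?z) \<le> k * (norm ?z)^2" using up by blast
  also have "\<dots> = (norm y)^2 / k" using k by (simp add: power2_eq_square)
  finally have a: "?z \<bullet> (A *v ?z) \<le> (norm y)^2 / k" .
  have "2 * (?z \<bullet> y) = 2 * (norm y)^2 / k" by (simp add: power2_norm_eq_inner)
  with a have "(norm y)^2 / k \<le> 2 * (?z \<bullet> y) - ?z \<bullet> (A *v ?z)" by linarith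
  also have "\<dots> \<le> y \<bullet> (matrix_inv A *v y)" by (rule inv_quad_ge[OF sym inv psd])
  finally show ?thesis .
qed


lemma pd_lower:
  assumes pd: "\<forall>x. x \<noteq> 0 \<longrightarrow> 0 < x \<bullet> ((A::real^'n^'n) *v x)"
  shows "\<exists>lam>0. \<forall>x. lam * (norm x)^2 \<le> x \<bullet> (A *v x)"
proof -
  have c: "continuous_on (sphere (0::real^'n) 1) (\<lambda>x. x \<bullet> (A *v x))"
    by (intro continuous_intros continuous_on_id bounded_linear.continuous_on[OF matrix_vector_mul_bounded_linear])
  obtain u where u: "u \<in> sphere 0 1" "\<forall>y\<in>sphere 0 1. u \<bullet> (A *v u) \<le> y \<bullet> (A *v y)"
    using continuous_attains_inf[OF compact_sphere _ c] by auto
  have "u \<noteq> 0" using u(1) by auto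
  then have lp: "0 < u \<bullet> (A *v u)" using pd by auto
  show ?thesis
  proof (intro exI conjI allI)
    show "0 < u \<bullet> (A *v u)" by (rule lp)
    fix x :: "real^'n"
    show "(u \<bullet> (A *v u)) * (norm x)^2 \<le> x \<bullet> (A *v x)"
    proof (cases "x = 0")
      case True then show ?thesis by simp
    next
      case False
      let ?y = "(1 / norm x) *\<^sub>R x"
      have "?y \<in> sphere 0 1" using False by simp
      then have "u \<bullet> (A *v u) \<le> ?y \<bullet> (A *v ?y)" using u(2) by blast
      also have "\<dots> = (x \<bullet> (A *v x)) / (norm x)^2"
        by (simp add: matrix_vector_mult_scaleR power2_eq_square)
      finally show ?thesis using False by (simp add: pos_le_divide_eq)
    qed
  qed
qed

lemma F_quad: "(x::real^'n) \<bullet> ((M ** (Q::real^'n^'n) ** transpose M) *v x) = (transpose M *v x) \<bullet> (Q *v (transpose M *v x))"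
  by (metis dot_mv_tr matrix_vector_mul_assoc)

lemma bl_quad: "bounded_linear (\<lambda>M::real^'n^'n. x \<bullet> (M *v x))"
  unfolding linear_conv_bounded_linear[symmetric]
  by (rule linearI) (simp_all add: matrix_vector_mult_add_rdistrib inner_add_right scaleR_matrix_vector_assoc[symmetric])

lemma bl_transpose: "bounded_linear (transpose :: real^'n^'m \<Rightarrow> real^'m^'n)"
  unfolding linear_conv_bounded_linear[symmetric]
  by (rule linearI) (simp_all add: transpose_def vec_eq_iff)

lemma quad_integral:
  assumes "F integrable_on S"
  shows "(\<lambda>s. x \<bullet> (F s *v x)) integrable_on S \<and> integral S (\<lambda>s. x \<bullet> (F s *v x)) = x \<bullet> (integral S F *v (x::real^'n))"
  using integrable_linear[OF assms bl_quad[of x]] integral_linear[OF assms bl_quad[of x]]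
  by (simp add: o_def)

lemma transpose_integral:
  assumes "(F :: real \<Rightarrow> real^'n^'n) integrable_on S" and "\<And>s. transpose (F s) = F s"
  shows "transpose (integral S F) = integral S F"
proof -
  have "integral S (\<lambda>s. transpose (F s)) = transpose (integral S F)"
    using integral_linear[OF assms(1) bl_transpose] by (simp add: o_def)
  moreover have "integral S (\<lambda>s. transpose (F s)) = integral S F" using assms(2) by simp
  ultimately show ?thesis by simp
qed

lemma F_sym: "transpose (Q::real^'n^'n) = Q \<Longrightarrow> transpose (M ** Q ** transpose M) = M ** Q ** transpose M"
  by (simp add: matrix_transpose_mul matrix_mul_assoc)


lemma mexp_near_I:
  assumes "0 \<le> s" "s \<le> 1"
  shows "norm (mexp (s *\<^sub>R (B::real^'n^'n)) - mat 1) \<le> norm (mat 1 :: real^'n^'n) * norm B * exp (norm B) * s"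
proof -
  let ?N = "norm (mat 1 :: real^'n^'n)"
  have nb: "norm (s *\<^sub>R B) = s * norm B" using assms by simp
  have "norm (mexp (s *\<^sub>R B) - mat 1) \<le> ?N * (exp (s * norm B) - 1)" using mexp_sub_I[of "s *\<^sub>R B"] by (simp only: nb)
  also have "\<dots> \<le> ?N * (s * norm B * exp (s * norm B))"
    by (rule mult_left_mono[OF exp_sub1_le]) (use assms in auto)
  also have "\<dots> \<le> ?N * (s * norm B * exp (norm B))"
    using assms by (intro mult_left_mono) (auto intro!: mult_left_mono simp: mult_le_cancel_right1 mult_left_le_one_le)
  finally show ?thesis by (simp add: algebra_simps)
qed

lemma mexp_bound01:
  assumes "0 \<le> s" "s \<le> 1"
  shows "norm (mexp (s *\<^sub>R (B::real^'n^'n))) \<le> norm (mat 1 :: real^'n^'n) * exp (norm B)"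
proof -
  have "norm (mexp (s *\<^sub>R B)) \<le> norm (mat 1 :: real^'n^'n) * exp (norm (s *\<^sub>R B))" by (rule mexp_norm)
  also have "\<dots> \<le> norm (mat 1 :: real^'n^'n) * exp (norm B)"
    using assms by (intro mult_left_mono) (auto simp: mult_left_le_one_le)
  finally show ?thesis .
qed

lemma F_norm:
  assumes "0 \<le> s" "s \<le> 1"
  shows "norm (mexp (s *\<^sub>R (B::real^'n^'n)) ** Q ** transpose (mexp (s *\<^sub>R B))) \<le> (norm (mat 1 :: real^'n^'n) * exp (norm B))^2 * norm Q"
proof -
  let ?m = "mexp (s *\<^sub>R B)" and ?K = "norm (mat 1 :: real^'n^'n) * exp (norm B)"
  have "norm (?m ** Q ** transpose ?m) \<le> norm (?m ** Q) * norm (transpose ?m)" by (rule norm_mm)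
  also have "\<dots> \<le> (norm ?m * norm Q) * norm ?m" by (simp add: norm_transpose mult_right_mono norm_mm)
  also have "\<dots> \<le> (?K * norm Q) * ?K"
    using mexp_bound01[OF assms, of B] by (intro mult_mono) (auto intro: mult_right_mono)
  finally show ?thesis by (simp add: power2_eq_square algebra_simps)
qed

lemma half_aux: "(a::real) > 0 \<Longrightarrow> a * (1 / (2 * a)) = 1/2"
  by simp

lemma F_lower:
  fixes B Q :: "real^'n^'n"
  assumes lam: "\<forall>x. lam * (norm x)^2 \<le> x \<bullet> (Q *v x)" "0 < lam"
    and s: "0 \<le> s" "s \<le> min 1 (1 / (2 * (norm (mat 1 :: real^'n^'n) * norm B * exp (norm B) + 1)))"
  shows "lam / 4 * (norm x)^2 \<le> x \<bullet> ((mexp (s *\<^sub>R B) ** Q ** transpose (mexp (s *\<^sub>R B))) *v x)"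
proof -
  let ?m = "mexp (s *\<^sub>R B)"
  let ?K = "norm (mat 1 :: real^'n^'n) * norm B * exp (norm B)"
  have K0: "0 \<le> ?K" by simp
  have s1: "s \<le> 1" using s by simp
  have "norm (?m - mat 1) \<le> ?K * s" using mexp_near_I[OF s(1) s1, of B] by simp
  also have "\<dots> \<le> (?K + 1) * (1 / (2 * (?K + 1)))"
    using s K0 by (intro mult_mono) auto
  also have "\<dots> = 1/2" using half_aux[of "?K + 1"] K0 by linarith
  finally have mI: "norm (?m - mat 1) \<le> 1/2" .
  let ?v = "transpose ?m *v x"
  have td: "transpose (?m - mat 1) = transpose ?m - mat 1"
    by (simp add: transpose_def vec_eq_iff mat_def)
  have ve: "?v = x + transpose (?m - mat 1) *v x"
    unfolding td by (simp add: matrix_vector_mult_diff_rdistrib)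
  have "norm (transpose (?m - mat 1) *v x) \<le> norm (?m - mat 1) * norm x"
    using norm_mv[of "transpose (?m - mat 1)" x] by (simp add: norm_transpose)
  also have "\<dots> \<le> 1/2 * norm x" by (rule mult_right_mono[OF mI norm_ge_zero])
  finally have w: "norm (transpose (?m - mat 1) *v x) \<le> 1/2 * norm x" .
  have "norm x \<le> norm ?v + norm (transpose (?m - mat 1) *v x)"
    using norm_triangle_ineq4[of ?v "transpose (?m - mat 1) *v x"] ve by simp
  with w have "norm x / 2 \<le> norm ?v" by linarith
  then have "(norm x / 2)^2 \<le> (norm ?v)^2" by (simp add: power_mono)
  then have "lam / 4 * (norm x)^2 \<le> lam * (norm ?v)^2" using lam(2) by (simp add: power_divide)
  also have "\<dots> \<le> ?v \<bullet> (Q *v ?v)" using lam(1) by blast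
  also have "\<dots> = x \<bullet> ((?m ** Q ** transpose ?m) *v x)" by (rule F_quad[symmetric])
  finally show ?thesis .
qed


lemma F_nonneg:
  assumes lam: "\<forall>x. lam * (norm x)^2 \<le> x \<bullet> ((Q::real^'n^'n) *v x)" "0 < lam"
  shows "0 \<le> x \<bullet> (((M::real^'n^'n) ** Q ** transpose M) *v x)"
proof -
  have "0 \<le> lam * (norm (transpose M *v x))^2" using lam(2) by simp
  also have "\<dots> \<le> (transpose M *v x) \<bullet> (Q *v (transpose M *v x))" using lam(1) by blast
  also have "\<dots> = x \<bullet> ((M ** Q ** transpose M) *v x)" by (rule F_quad[symmetric])
  finally show ?thesis .
qed

lemma Qt_norm:
  fixes B Q :: "real^'n^'n"
  shows "\<exists>M>0. \<forall>t. 0 \<le> t \<and> t \<le> 1 \<and> (\<lambda>s. mexp (s *\<^sub>R B) ** Q ** transpose (mexp (s *\<^sub>R B))) integrable_on {0..t}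
            \<longrightarrow> norm (Qt B Q t) \<le> M * t"
proof (intro exI conjI allI impI)
  let ?M = "(norm (mat 1 :: real^'n^'n) * exp (norm B))^2 * norm Q + 1"
  show "0 < ?M" by (simp add: add_nonneg_pos)
  fix t :: real
  let ?F = "\<lambda>s. mexp (s *\<^sub>R B) ** Q ** transpose (mexp (s *\<^sub>R B))"
  assume a: "0 \<le> t \<and> t \<le> 1 \<and> ?F integrable_on {0..t}"
  have hi: "(?F has_integral Qt B Q t) {0..t}" using a unfolding Qt_def by (simp add: integrable_integral)
  have M0: "0 \<le> ?M" by (simp add: add_nonneg_nonneg)
  have bnd: "norm (?F s) \<le> ?M" if "s \<in> {0..t} - {}" for s
  proof -
    have "0 \<le> s" "s \<le> 1" using a that by auto
    from F_norm[OF this, of B Q] show ?thesis by simp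
  qed
  show "norm (Qt B Q t) \<le> ?M * t"
    using has_integral_bound_real[OF M0 finite.emptyI hi bnd] a by (simp add: content_real)
qed

lemma Qt_lower:
  fixes B Q :: "real^'n^'n"
  assumes lam: "\<forall>x. lam * (norm x)^2 \<le> x \<bullet> (Q *v x)" "0 < lam"
  shows "\<exists>c>0. \<forall>t x. 0 < t \<and> t \<le> 1 \<and> (\<lambda>s. mexp (s *\<^sub>R B) ** Q ** transpose (mexp (s *\<^sub>R B))) integrable_on {0..t}
            \<longrightarrow> c * t * (norm x)^2 \<le> x \<bullet> (Qt B Q t *v x)"
proof -
  define s0 where "s0 = min 1 (1 / (2 * (norm (mat 1 :: real^'n^'n) * norm B * exp (norm B) + 1)))"
  have s0: "0 < s0" "s0 \<le> 1" unfolding s0_def by (auto intro!: divide_pos_pos add_nonneg_pos)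
  show ?thesis
  proof (intro exI conjI allI impI)
    show "0 < s0 * lam / 4" using s0 lam by simp
    fix t :: real and x :: "real^'n"
    let ?F = "\<lambda>s. mexp (s *\<^sub>R B) ** Q ** transpose (mexp (s *\<^sub>R B))"
    let ?phi = "\<lambda>s. x \<bullet> (?F s *v x)"
    assume a: "0 < t \<and> t \<le> 1 \<and> ?F integrable_on {0..t}"
    define r where "r = min t s0"
    have r: "0 \<le> r" "r \<le> t" "r \<le> s0" "s0 * t \<le> r" using a s0 unfolding r_def
      by (auto simp: mult_left_le_one_le mult_left_le mult_le_one)
    have q: "?phi integrable_on {0..t}" "integral {0..t} ?phi = x \<bullet> (Qt B Q t *v x)"
      using quad_integral[of ?F "{0..t}" x] a unfolding Qt_def by auto
    have qr: "?phi integrable_on {0..r}" by (rule integrable_on_subinterval[OF q(1)]) (use r in auto)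
    have "s0 * lam / 4 * t * (norm x)^2 \<le> r * (lam / 4 * (norm x)^2)"
      using mult_right_mono[OF r(4), of "lam / 4 * (norm x)^2"] lam(2) by (simp add: algebra_simps)
    also have "\<dots> = integral {0..r} (\<lambda>s. lam / 4 * (norm x)^2)" using r by simp
    also have "\<dots> \<le> integral {0..r} ?phi"
    proof (rule integral_le[OF _ qr])
      show "(\<lambda>s. lam / 4 * (norm x)^2) integrable_on {0..r}" by (rule integrable_const_ivl)
      fix s assume "s \<in> {0..r}"
      then have "0 \<le> s" "s \<le> min 1 (1 / (2 * (norm (mat 1 :: real^'n^'n) * norm B * exp (norm B) + 1)))"
        using r s0_def by auto
      from F_lower[OF lam this] show "lam / 4 * (norm x)^2 \<le> ?phi s" .
    qed
    also have "\<dots> \<le> integral {0..t} ?phi"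
      by (rule integral_subset_le[OF _ qr q(1)]) (use r F_nonneg[OF lam] in auto)
    finally show "s0 * lam / 4 * t * (norm x)^2 \<le> x \<bullet> (Qt B Q t *v x)" using q(2) by simp
  qed
qed


lemma det_scale: "det (t *\<^sub>R (A::real^'n^'n)) = t ^ CARD('n) * det A"
proof -
  have "t *\<^sub>R A = (\<chi> i. t *s (A$i))" by (simp add: vec_eq_iff)
  then have "det (t *\<^sub>R A) = prod (\<lambda>i. t) (UNIV::'n set) * det (\<chi> i. A$i)"
    using det_rows_mul[of "\<lambda>i. t" "\<lambda>i. A$i"] by simp
  then show ?thesis by simp
qed

lemma det_lower_compact:
  assumes c: "c > 0"
  shows "\<exists>m>0. \<forall>A::real^'n^'n. norm A \<le> M \<and> (\<forall>x. c * (norm x)^2 \<le> x \<bullet> (A *v x)) \<longrightarrow> m \<le> det A"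
proof -
  define S where "S = cball (0::real^'n^'n) M \<inter> (\<Inter>x. {A. c * (norm x)^2 \<le> x \<bullet> (A *v x)})"
  have cl: "closed (\<Inter>x. {A::real^'n^'n. c * (norm x)^2 \<le> x \<bullet> (A *v x)})"
  proof (rule closed_INT, rule ballI)
    fix x :: "real^'n"
    show "closed {A::real^'n^'n. c * (norm x)^2 \<le> x \<bullet> (A *v x)}"
      by (rule closed_Collect_le) (auto intro!: continuous_intros bounded_linear.continuous_on[OF bl_quad])
  qed
  have cS: "compact S" unfolding S_def by (rule compact_Int_closed[OF compact_cball cl])
  show ?thesis
  proof (cases "S = {}")
    case True
    show ?thesis
      by (rule exI[of _ 1]) (use True in \<open>auto simp: S_def\<close>)
  next
    case False
    obtain A0 where A0: "A0 \<in> S" "\<forall>A\<in>S. det A0 \<le> det A"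
      using continuous_attains_inf[OF cS False det_cont[OF continuous_on_id]] by auto
    have "\<forall>x. x \<noteq> 0 \<longrightarrow> 0 < x \<bullet> (A0 *v x)"
    proof (intro allI impI)
      fix x :: "real^'n" assume "x \<noteq> 0"
      then have "0 < c * (norm x)^2" using c by simp
      also have "\<dots> \<le> x \<bullet> (A0 *v x)" using A0(1) unfolding S_def by auto
      finally show "0 < x \<bullet> (A0 *v x)" .
    qed
    then have "0 < det A0" by (rule pd_det_pos)
    then show ?thesis using A0(2) unfolding S_def by (intro exI[of _ "det A0"]) auto
  qed
qed


lemma Dt_bound:
  fixes B Q :: "real^'n^'n"
  assumes inv: "invertible (Qinf B Q)"
  shows "\<exists>L>0. \<forall>t u. 0 \<le> t \<and> t \<le> 1 \<longrightarrow> norm (Dt B Q t *v u - u) \<le> L * t * norm u"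
proof -
  let ?QI = "Qinf B Q" and ?QIi = "matrix_inv (Qinf B Q)"
  define K1 where "K1 = norm (mat 1 :: real^'n^'n) * norm (- transpose B) * exp (norm (- transpose B))"
  have K1: "0 \<le> K1" unfolding K1_def by simp
  show ?thesis
  proof (intro exI conjI allI impI)
    show "0 < norm ?QI * K1 * norm ?QIi + 1" using K1 by (simp add: add_nonneg_pos)
    fix t :: real and u :: "real^'n"
    assume t: "0 \<le> t \<and> t \<le> 1"
    let ?E = "mexp ((- t) *\<^sub>R transpose B)"
    have Ee: "(- t) *\<^sub>R transpose B = t *\<^sub>R (- transpose B)" by simp
    have EI: "norm (?E - mat 1) \<le> K1 * t" unfolding Ee K1_def using mexp_near_I[of t "- transpose B"] t by simp
    define w where "w = ?QIi *v u"
    have u: "u = ?QI *v w" unfolding w_def using mat_inv[OF inv] by (simp add: matrix_vector_mul_assoc)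
    have D: "Dt B Q t *v u = ?QI *v (?E *v w)" unfolding Dt_def w_def by (simp add: matrix_vector_mul_assoc matrix_mul_assoc)
    have diff: "Dt B Q t *v u - u = ?QI *v ((?E - mat 1) *v w)"
      unfolding D by (subst u) (simp add: matrix_vector_mult_diff_rdistrib matrix_vector_mult_diff_distrib)
    have "norm (Dt B Q t *v u - u) \<le> norm ?QI * norm ((?E - mat 1) *v w)" unfolding diff by (rule norm_mv)
    also have "\<dots> \<le> norm ?QI * (norm (?E - mat 1) * norm w)" by (intro mult_left_mono norm_mv) simp
    also have "\<dots> \<le> norm ?QI * ((K1 * t) * (norm ?QIi * norm u))"
      unfolding w_def using EI K1 t by (intro mult_left_mono mult_mono norm_mv) auto
    also have "\<dots> = (norm ?QI * K1 * norm ?QIi) * t * norm u" by (simp add: algebra_simps)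
    also have "\<dots> \<le> (norm ?QI * K1 * norm ?QIi + 1) * t * norm u" using t by (intro mult_right_mono) auto
    finally show "norm (Dt B Q t *v u - u) \<le> (norm ?QI * K1 * norm ?QIi + 1) * t * norm u" .
  qed
qed

lemma prefactor:
  fixes dI m t dt trB :: real
  assumes "0 < dI" "0 < m" "0 < t" "t \<le> 1" "m * t ^ n \<le> dt"
  shows "0 \<le> inverse ((2 * pi) ^ n) * inverse (sqrt (dI * dt)) * exp (t * trB)
    \<and> inverse ((2 * pi) ^ n) * inverse (sqrt (dI * dt)) * exp (t * trB)
       \<le> (exp \<bar>trB\<bar> * inverse ((2 * pi) ^ n) * inverse (sqrt (dI * m))) * sqrt ((1/t) ^ n)"
proof
  have mt: "0 < m * t ^ n" using assms by simp
  have dt: "0 < dt" using mt assms by linarith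
  show "0 \<le> inverse ((2 * pi) ^ n) * inverse (sqrt (dI * dt)) * exp (t * trB)" using dt assms by simp
  have "sqrt (dI * (m * t ^ n)) \<le> sqrt (dI * dt)" using assms by (simp add: mult_left_mono)
  then have i1: "inverse (sqrt (dI * dt)) \<le> inverse (sqrt (dI * (m * t ^ n)))"
    using assms mt by (intro le_imp_inverse_le) auto
  have "inverse (sqrt (dI * (m * t ^ n))) = inverse (sqrt (dI * m)) * sqrt ((1/t) ^ n)"
    by (simp add: real_sqrt_mult power_one_over real_sqrt_divide inverse_eq_divide)
  with i1 have i2: "inverse (sqrt (dI * dt)) \<le> inverse (sqrt (dI * m)) * sqrt ((1/t) ^ n)" by simp
  have e: "exp (t * trB) \<le> exp \<bar>trB\<bar>"
  proof -
    have "t * trB \<le> \<bar>t * trB\<bar>" by simp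
    also have "\<dots> = t * \<bar>trB\<bar>" using assms by (simp add: abs_mult)
    also have "\<dots> \<le> 1 * \<bar>trB\<bar>" using assms by (intro mult_right_mono) auto
    finally show ?thesis by simp
  qed
  have "inverse ((2 * pi) ^ n) * inverse (sqrt (dI * dt)) * exp (t * trB)
      \<le> inverse ((2 * pi) ^ n) * (inverse (sqrt (dI * m)) * sqrt ((1/t) ^ n)) * exp \<bar>trB\<bar>"
    using i2 e dt assms by (intro mult_mono) auto
  then show "inverse ((2 * pi) ^ n) * inverse (sqrt (dI * dt)) * exp (t * trB)
       \<le> (exp \<bar>trB\<bar> * inverse ((2 * pi) ^ n) * inverse (sqrt (dI * m))) * sqrt ((1/t) ^ n)"
    by (simp add: algebra_simps)
qed

lemma det_zero_mat: "det (0::real^'n^'n) = 0"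
proof -
  have "(0::real^'n^'n) = mat 0" by (simp add: vec_eq_iff mat_def)
  then show ?thesis by (metis det_0)
qed

lemma pow_fact_le_exp: "0 \<le> (x::real) \<Longrightarrow> x ^ n / fact n \<le> exp x"
proof -
  assume x: "0 \<le> x"
  have s: "(\<lambda>k. x ^ k / fact k) sums exp x" using exp_converges[of x] by (simp add: divide_inverse mult.commute)
  have "sum (\<lambda>k. x ^ k / fact k) {n} \<le> suminf (\<lambda>k. x ^ k / fact k)"
    by (rule sum_le_suminf) (use s x in \<open>auto simp: sums_iff\<close>)
  then show ?thesis using s by (simp add: sums_iff)
qed

lemma sqrt_exp_bound:
  assumes b: "0 < (b::real)"
  shows "\<exists>K. \<forall>s>0. sqrt (s ^ n) * exp (- (b * s)) \<le> K"
proof (intro exI allI impI)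
  fix s :: real assume s: "0 < s"
  have sq: "sqrt (s ^ n) \<le> 1 + s ^ n"
  proof (cases "s ^ n \<le> 1")
    case True
    then have "sqrt (s ^ n) \<le> 1" by simp
    moreover have "0 \<le> s ^ n" using s by simp
    ultimately show ?thesis by linarith
  next
    case False
    then have h1: "1 \<le> sqrt (s^n)" by simp
    have "sqrt (s^n) * 1 \<le> sqrt (s^n) * sqrt (s^n)" using h1 by (intro mult_left_mono) auto
    then have "sqrt (s^n) \<le> s^n" using s by simp
    then show ?thesis by simp
  qed
  have e1: "exp (- (b * s)) \<le> 1" using b s by simp
  have "(b * s) ^ n / fact n \<le> exp (b * s)" by (rule pow_fact_le_exp) (use b s in simp)
  then have "s ^ n * b ^ n \<le> fact n * exp (b * s)" by (simp add: power_mult_distrib divide_le_eq mult.commute)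
  then have "s ^ n * b ^ n * exp (- (b * s)) \<le> fact n" by (simp add: exp_minus divide_simps)
  then have e2: "s ^ n * exp (- (b * s)) \<le> fact n / b ^ n" using b by (simp add: divide_simps mult.commute mult.left_commute)
  have "sqrt (s ^ n) * exp (- (b * s)) \<le> (1 + s ^ n) * exp (- (b * s))"
    by (rule mult_right_mono[OF sq]) simp
  also have "\<dots> = exp (- (b * s)) + s ^ n * exp (- (b * s))" by (simp add: algebra_simps)
  also have "\<dots> \<le> 1 + fact n / b ^ n" using e1 e2 by linarith
  finally show "sqrt (s ^ n) * exp (- (b * s)) \<le> 1 + fact n / b ^ n" .
qed


lemma sqrt_pow_sq: "0 \<le> (A::real) \<Longrightarrow> sqrt ((A^2) ^ n) = A ^ n"
proof -
  assume "0 \<le> A"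
  have "(A^2) ^ n = (A^n)^2" by (metis power_mult mult.commute)
  then show ?thesis using \<open>0 \<le> A\<close> by simp
qed

lemma l1: "0 < Mq \<Longrightarrow> 0 < (t::real) \<Longrightarrow> 0 < A \<Longrightarrow> (1/(4*A^2))/(2*Mq*t) = 2*((1 / (16 * Mq)) * (1 / (t * A^2)))"
  by (simp add: field_simps)
lemma l2: "0 < Mq \<Longrightarrow> 0 < (t::real) \<Longrightarrow> Y^2 / (2 * Mq * t) = (Y^2 / (Mq * t)) / 2"
  by simp
lemma l3: "0 < (A::real) \<Longrightarrow> (1/(2*A))^2 = 1/(4*A^2)"
  by (simp add: power2_eq_square)
lemma l4: "0 < (t::real) \<Longrightarrow> 1 \<le> A \<Longrightarrow> 1 / t = A^2 * (1 / (t * A^2))"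
  by (simp add: field_simps)
lemma l5: "0 < (t::real) \<Longrightarrow> 1 \<le> A \<Longrightarrow> 1 / A < 4 * L * t * A \<Longrightarrow> 1 / t \<le> 4 * L * A^2"
proof -
  assume t: "0 < t" and A: "1 \<le> A" and h: "1 / A < 4 * L * t * A"
  have "1 < 4 * L * t * A * A" using h A by (simp add: divide_less_eq)
  then have "1 / t < 4 * L * A * A" using t by (simp add: divide_less_eq algebra_simps)
  then show ?thesis by (simp add: power2_eq_square algebra_simps)
qed
lemma scalar_main:
  fixes G Mq Mi L :: real and n :: nat
  assumes G: "0 < G" and Mq: "0 < Mq" and Mi: "0 \<le> Mi" and L: "0 < L"
  shows "\<exists>C. \<forall>t X d Y U q P. 0 < t \<and> t \<le> 1 \<and> 0 \<le> X \<and> 1 / (1 + X) < d \<and> d - L * t * U \<le> Y \<and> 0 \<le> Y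
          \<and> U \<le> X + d \<and> 0 \<le> U \<and> 0 \<le> q \<and> Y^2 / (Mq * t) - Mi * Y^2 \<le> q \<and> 0 \<le> P \<and> P \<le> G * sqrt ((1/t) ^ n)
          \<longrightarrow> P * exp (- q / 2) \<le> C * (1 + X) ^ n"
proof -
  define b where "b = 1 / (16 * Mq)"
  have b: "0 < b" using Mq by (simp add: b_def)
  obtain K where K: "\<And>s. 0 < s \<Longrightarrow> sqrt (s ^ n) * exp (- (b * s)) \<le> K" using sqrt_exp_bound[OF b] by blast
  have "0 < sqrt (1 ^ n) * exp (- (b * 1))" by simp
  then have K0: "0 \<le> K" using K[of 1] by linarith
  define t1 where "t1 = min (1 / (2 * Mq * (Mi + 1))) (1 / (4 * L))"
  have t1: "0 < t1" using Mq Mi L by (simp add: t1_def)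
  define C where "C = G * (sqrt ((1/t1) ^ n) + K + sqrt ((4 * L) ^ n))"
  show ?thesis
  proof (intro exI[of _ C] allI impI)
    fix t X d Y U q P :: real
    assume h: "0 < t \<and> t \<le> 1 \<and> 0 \<le> X \<and> 1 / (1 + X) < d \<and> d - L * t * U \<le> Y \<and> 0 \<le> Y
          \<and> U \<le> X + d \<and> 0 \<le> U \<and> 0 \<le> q \<and> Y^2 / (Mq * t) - Mi * Y^2 \<le> q \<and> 0 \<le> P \<and> P \<le> G * sqrt ((1/t) ^ n)"
    define A where "A = 1 + X"
    have A: "1 \<le> A" using h by (simp add: A_def)
    have An: "1 \<le> A ^ n" using A by simp
    have e1: "exp (- q / 2) \<le> 1" using h by simp
    have Pe: "P * exp (- q / 2) \<le> P" using e1 h by (simp add: mult_left_le)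
    have s1: "0 \<le> sqrt ((1/t1) ^ n)" "0 \<le> sqrt ((4 * L) ^ n)" using t1 L by auto
    show "P * exp (- q / 2) \<le> C * (1 + X) ^ n"
    proof (cases "t1 \<le> t")
      case True
      have "(1/t) ^ n \<le> (1/t1) ^ n" using True t1 h by (intro power_mono) (auto simp: divide_simps)
      then have "sqrt ((1/t) ^ n) \<le> sqrt ((1/t1) ^ n)" by simp
      then have "G * sqrt ((1/t) ^ n) \<le> G * sqrt ((1/t1) ^ n)" using G by (intro mult_left_mono) auto
      then have "P \<le> G * sqrt ((1/t1) ^ n)" using h by linarith
      also have "\<dots> \<le> C" unfolding C_def using G K0 s1 by (intro mult_left_mono) auto
      also have "\<dots> \<le> C * A ^ n"
      proof -
        have C0: "0 \<le> C" unfolding C_def using G K0 s1 by simp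
        show ?thesis using mult_left_mono[OF An C0] by simp
      qed
      finally show ?thesis using Pe A_def by simp
    next
      case False
      then have tt1: "t < t1" by simp
      have c0: "0 < 2 * Mq * (Mi + 1)" "0 < 4 * L" using Mq Mi L by auto
      have "t < 1 / (2 * Mq * (Mi + 1))" "t < 1 / (4 * L)" using tt1 by (auto simp: t1_def)
      then have t2: "t * (2 * Mq * (Mi + 1)) \<le> 1" "4 * L * t \<le> 1"
        using c0 by (auto simp: pos_less_divide_eq mult.commute less_imp_le)
      have hq: "Y^2 / (2 * Mq * t) \<le> q"
      proof -
        have "Mi * (2 * Mq * t) \<le> (Mi + 1) * (2 * Mq * t)" using Mq h by (intro mult_right_mono) auto
        also have "\<dots> = t * (2 * Mq * (Mi + 1))" by (simp add: algebra_simps)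
        finally have "Mi * (2 * Mq * t) \<le> 1" using t2 by linarith
        then have "Mi \<le> 1 / (2 * Mq * t)" using Mq h by (simp add: divide_simps mult.commute)
        then have "Y^2 * Mi \<le> Y^2 * (1 / (2 * Mq * t))" by (rule mult_left_mono) simp
        have e1: "Y^2 / (2 * Mq * t) = (Y^2 / (Mq * t)) / 2" using l2[OF Mq, of t Y] h by simp
        note \<open>Y^2 * Mi \<le> Y^2 * (1 / (2 * Mq * t))\<close>
        also have "Y^2 * (1 / (2 * Mq * t)) = Y^2 / (2 * Mq * t)" by simp
        also have "\<dots> = (Y^2 / (Mq * t)) / 2" by (rule e1)
        finally have "Y^2 * Mi \<le> (Y^2 / (Mq * t)) / 2" .
        then have "Y^2 / (2 * Mq * t) \<le> Y^2 / (Mq * t) - Mi * Y^2" unfolding e1 by (simp add: mult.commute)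
        then show ?thesis using h by linarith
      qed
      show ?thesis
      proof (cases "L * t * U \<le> d / 2")
        case True
        have dA: "1 / A < d" using h A_def by simp
        have "d / 2 \<le> Y" using True h by linarith
        moreover have "1 / (2 * A) = (1 / A) / 2" by simp
        ultimately have "1 / (2 * A) \<le> Y" using dA by linarith
        then have "(1 / (2 * A))^2 \<le> Y^2" using A by (intro power_mono) auto
        then have "1 / (4 * A^2) \<le> Y^2" using l3[of A] A by simp
        then have "1 / (4 * A^2) / (2 * Mq * t) \<le> Y^2 / (2 * Mq * t)" using Mq h by (intro divide_right_mono) auto
        define s where "s = 1 / (t * A^2)"
        have s: "0 < s" using h A by (simp add: s_def)
        have "2 * (b * s) \<le> q" using hq \<open>1 / (4 * A^2) / (2 * Mq * t) \<le> Y^2 / (2 * Mq * t)\<close>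
          l1[OF Mq, of t A] h A unfolding b_def s_def by linarith
        then have "b * s \<le> q / 2" by simp
        then have ee: "exp (- q / 2) \<le> exp (- (b * s))" by simp
        have ts: "1 / t = A^2 * s" using h A l4 by (simp add: s_def)
        have "sqrt ((1/t) ^ n) = A ^ n * sqrt (s ^ n)"
          unfolding ts power_mult_distrib real_sqrt_mult using A by (simp add: sqrt_pow_sq)
        then have "P * exp (- q / 2) \<le> G * (A ^ n * sqrt (s ^ n)) * exp (- (b * s))"
        proof -
          have "P \<le> G * (A ^ n * sqrt (s ^ n))" using h \<open>sqrt ((1/t) ^ n) = A ^ n * sqrt (s ^ n)\<close> by simp
          moreover have "0 \<le> G * (A ^ n * sqrt (s ^ n))" using G A s by simp
          ultimately show ?thesis using ee by (intro mult_mono) auto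
        qed
        also have "\<dots> = G * A ^ n * (sqrt (s ^ n) * exp (- (b * s)))" by (simp add: algebra_simps)
        also have "\<dots> \<le> G * A ^ n * K" using K[OF s] G A by (intro mult_left_mono) auto
        also have "\<dots> \<le> C * A ^ n"
        proof -
          have "K \<le> sqrt ((1/t1) ^ n) + K + sqrt ((4 * L) ^ n)" using s1 by linarith
          then have "G * A ^ n * K \<le> G * A ^ n * (sqrt ((1/t1) ^ n) + K + sqrt ((4 * L) ^ n))"
            using G A by (intro mult_left_mono) auto
          then show ?thesis unfolding C_def by (simp only: ac_simps)
        qed
        finally show ?thesis by (simp add: A_def)
      next
        case False
        have "d < 2 * L * t * U" using False by simp
        also have "\<dots> \<le> 2 * L * t * (X + d)" using h L by (intro mult_left_mono) auto
        finally have d1: "d < 2 * L * t * (X + d)" .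
        have "0 < 1 / (1 + X)" using h by simp
        then have d0: "0 < d" using h by linarith
        have "2 * L * t \<le> 1/2" using t2 by linarith
        then have "2 * L * t * (X + d) \<le> 1/2 * (X + d)" using h d0 by (intro mult_right_mono) auto
        with d1 have "d < 1/2 * (X + d)" by (rule less_le_trans)
        then have "d < X" by (simp add: field_simps)
        have "2 * L * t * (X + d) \<le> 2 * L * t * (2 * A)" using \<open>d < X\<close> h L by (intro mult_left_mono) (auto simp: A_def)
        with d1 have "d < 2 * L * t * (2 * A)" by (rule less_le_trans)
        then have "d < 4 * L * t * A" by (simp add: mult_ac)
        then have "1 / A < 4 * L * t * A" using h A_def by simp
        then have it: "1 / t \<le> 4 * L * A^2" using h A l5 by blast
        have "(1/t) ^ n \<le> (4 * L * A^2) ^ n" using it h by (intro power_mono) auto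
        then have "sqrt ((1/t) ^ n) \<le> sqrt ((4 * L) ^ n) * A ^ n"
        proof -
          have "sqrt ((1/t) ^ n) \<le> sqrt ((4 * L * A^2) ^ n)" using \<open>(1/t) ^ n \<le> (4 * L * A^2) ^ n\<close> by simp
          also have "\<dots> = sqrt ((4 * L) ^ n) * A ^ n"
            using A sqrt_pow_sq[of A n] by (simp only: power_mult_distrib real_sqrt_mult)
          finally show ?thesis .
        qed
        then have "G * sqrt ((1/t) ^ n) \<le> G * (sqrt ((4 * L) ^ n) * A ^ n)" using G by (intro mult_left_mono) auto
        then have "P \<le> G * (sqrt ((4 * L) ^ n) * A ^ n)" using h by linarith
        also have "\<dots> \<le> C * A ^ n"
        proof -
          have "sqrt ((4 * L) ^ n) \<le> sqrt ((1/t1) ^ n) + K + sqrt ((4 * L) ^ n)" using s1 K0 by linarith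
          then have "G * A ^ n * sqrt ((4 * L) ^ n) \<le> G * A ^ n * (sqrt ((1/t1) ^ n) + K + sqrt ((4 * L) ^ n))"
            using G A by (intro mult_left_mono) auto
          then show ?thesis unfolding C_def by (simp only: ac_simps)
        qed
        finally show ?thesis using Pe by (simp add: A_def)
      qed
    qed
  qed
qed


theorem lemma4p2:
  fixes Q B :: "real^'n^'n"
  assumes "sym_pos_def_mat Q"
    and "\<And>z. complex_eigenvalue B z \<Longrightarrow> Re z < 0"
  shows "\<exists>C. \<forall>x u :: real^'n. \<forall>t :: real.
           norm (x - u) > 1 / (1 + norm x) \<and> 0 < t \<and> t \<le> 1 \<longrightarrow>
           KUO B Q t x u \<le> C * exp (- Rfun B Q x) * (1 + norm x) ^ CARD('n)"
proof -
  define F where "F = (\<lambda>s. mexp (s *\<^sub>R B) ** Q ** transpose (mexp (s *\<^sub>R B)))"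
  have Qsym: "transpose Q = Q" and Qpd: "\<forall>x. x \<noteq> 0 \<longrightarrow> 0 < x \<bullet> (Q *v x)"
    using assms(1) unfolding sym_pos_def_mat_def by auto
  obtain lam where lam: "0 < lam" "\<forall>x. lam * (norm x)^2 \<le> x \<bullet> (Q *v x)"
    using pd_lower[OF Qpd] by blast
  show ?thesis
  proof (cases "F integrable_on {0..}")
    case False
    then have "Qinf B Q = 0" unfolding Qinf_def F_def by (simp add: not_integrable_integral)
    then have K0: "KUO B Q t x u = 0" for t x u unfolding KUO_def by (simp add: det_zero_mat)
    show ?thesis by (rule exI[of _ 0]) (simp add: K0)
  next
    case True
    have Fint: "F integrable_on {0..t}" for t
      by (rule integrable_on_subinterval[OF True]) auto
    obtain Mq where Mq: "0 < Mq" "\<And>t. 0 \<le> t \<Longrightarrow> t \<le> 1 \<Longrightarrow> norm (Qt B Q t) \<le> Mq * t"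
      using Qt_norm[of B Q] Fint unfolding F_def by blast
    obtain c where c: "0 < c" "\<And>t x. 0 < t \<Longrightarrow> t \<le> 1 \<Longrightarrow> c * t * (norm x)^2 \<le> x \<bullet> (Qt B Q t *v x)"
      using Qt_lower[OF lam(2) lam(1), of B] Fint unfolding F_def by blast
    obtain m where m: "0 < m" "\<And>A::real^'n^'n. norm A \<le> Mq \<Longrightarrow> (\<forall>x. c * (norm x)^2 \<le> x \<bullet> (A *v x)) \<Longrightarrow> m \<le> det A"
      using det_lower_compact[OF c(1), of Mq, where 'n='n] by blast
    define QI where "QI = Qinf B Q"
    have QIF: "QI = integral {0..} F" unfolding QI_def Qinf_def F_def ..
    have QtF: "Qt B Q t = integral {0..t} F" for t unfolding Qt_def F_def ..
    have Fsym: "transpose (F s) = F s" for s unfolding F_def by (rule F_sym[OF Qsym])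
    have Fnn: "0 \<le> x \<bullet> (F s *v x)" for s x unfolding F_def by (rule F_nonneg[OF lam(2) lam(1)])
    have QIsym: "transpose QI = QI" unfolding QIF by (rule transpose_integral[OF True Fsym])
    have Qtsym: "transpose (Qt B Q t) = Qt B Q t" for t unfolding QtF by (rule transpose_integral[OF Fint Fsym])
    have QIge: "x \<bullet> (Qt B Q t *v x) \<le> x \<bullet> (QI *v x)" if "0 \<le> t" for t x
    proof -
      have a: "(\<lambda>s. x \<bullet> (F s *v x)) integrable_on {0..t}" "integral {0..t} (\<lambda>s. x \<bullet> (F s *v x)) = x \<bullet> (Qt B Q t *v x)"
        using quad_integral[OF Fint[of t], of x] QtF by auto
      have b: "(\<lambda>s. x \<bullet> (F s *v x)) integrable_on {0..}" "integral {0..} (\<lambda>s. x \<bullet> (F s *v x)) = x \<bullet> (QI *v x)"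
        using quad_integral[OF True, of x] QIF by auto
      have "integral {0..t} (\<lambda>s. x \<bullet> (F s *v x)) \<le> integral {0..} (\<lambda>s. x \<bullet> (F s *v x))"
        by (rule integral_subset_le[OF _ a(1) b(1)]) (auto simp: Fnn)
      then show ?thesis using a(2) b(2) by simp
    qed
    have QIlow: "c * (norm x)^2 \<le> x \<bullet> (QI *v x)" for x
      using c(2)[of 1 x] QIge[of 1 x] by simp
    have QIpd: "\<forall>x. x \<noteq> 0 \<longrightarrow> 0 < x \<bullet> (QI *v x)"
    proof (intro allI impI)
      fix x :: "real^'n" assume "x \<noteq> 0"
      then have "0 < c * (norm x)^2" using c(1) by simp
      then show "0 < x \<bullet> (QI *v x)" using QIlow[of x] by linarith
    qed
    have QIinv: "invertible QI" by (rule pd_invertible[OF QIpd])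
    have dI: "0 < det QI" by (rule pd_det_pos[OF QIpd])
    have QIpsd: "\<forall>z. 0 \<le> z \<bullet> (QI *v z)" using QIlow c(1) by (meson order_trans mult_nonneg_nonneg less_imp_le zero_le_power2)
    have Qtpd: "\<forall>x. x \<noteq> 0 \<longrightarrow> 0 < x \<bullet> (Qt B Q t *v x)" if "0 < t" "t \<le> 1" for t
    proof (intro allI impI)
      fix x :: "real^'n" assume "x \<noteq> 0"
      then have "0 < c * t * (norm x)^2" using c(1) that by simp
      then show "0 < x \<bullet> (Qt B Q t *v x)" using c(2)[OF that, of x] by linarith
    qed
    have Qtpsd: "\<forall>z. 0 \<le> z \<bullet> (Qt B Q t *v z)" if "0 < t" "t \<le> 1" for t
    proof
      fix z :: "real^'n"
      show "0 \<le> z \<bullet> (Qt B Q t *v z)" using Qtpd[OF that, rule_format, of z] by (cases "z = 0") auto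
    qed
    have Qtup: "\<forall>z. z \<bullet> (Qt B Q t *v z) \<le> (Mq * t) * (norm z)^2" if "0 < t" "t \<le> 1" for t
    proof
      fix z :: "real^'n"
      have "z \<bullet> (Qt B Q t *v z) \<le> norm z * norm (Qt B Q t *v z)" by (rule norm_cauchy_schwarz)
      also have "\<dots> \<le> norm z * (norm (Qt B Q t) * norm z)" by (intro mult_left_mono norm_mv) simp
      also have "\<dots> \<le> norm z * ((Mq * t) * norm z)" using Mq(2)[of t] that by (intro mult_left_mono mult_right_mono) auto
      finally show "z \<bullet> (Qt B Q t *v z) \<le> (Mq * t) * (norm z)^2" by (simp add: power2_eq_square algebra_simps)
    qed
    have detQt: "m * t ^ CARD('n) \<le> det (Qt B Q t)" if t: "0 < t" "t \<le> 1" for t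
    proof -
      define A where "A = (1 / t) *\<^sub>R Qt B Q t"
      have QA: "Qt B Q t = t *\<^sub>R A" using t by (simp add: A_def)
      have "norm A = norm (Qt B Q t) / t" using t by (simp add: A_def)
      also have "\<dots> \<le> Mq" using Mq(2)[of t] t by (simp add: divide_le_eq mult.commute)
      finally have nA: "norm A \<le> Mq" .
      have lA: "\<forall>x. c * (norm x)^2 \<le> x \<bullet> (A *v x)"
      proof
        fix x :: "real^'n"
        have "x \<bullet> (A *v x) = (x \<bullet> (Qt B Q t *v x)) / t"
          by (simp add: A_def scaleR_matrix_vector_assoc[symmetric] divide_inverse mult.commute)
        moreover have "c * t * (norm x)^2 \<le> x \<bullet> (Qt B Q t *v x)" by (rule c(2)[OF t])
        ultimately show "c * (norm x)^2 \<le> x \<bullet> (A *v x)" using t by (simp add: le_divide_eq mult.commute mult.left_commute)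
      qed
      have "m \<le> det A" by (rule m(2)[OF nA lA])
      then have "t ^ CARD('n) * m \<le> t ^ CARD('n) * det A" using t by (intro mult_left_mono) auto
      then show ?thesis unfolding QA det_scale by (simp add: mult.commute)
    qed
    define Mi where "Mi = norm (matrix_inv QI)"
    have Mi: "0 \<le> Mi" by (simp add: Mi_def)
    define qf where "qf t y = ((matrix_inv (Qt B Q t) - matrix_inv QI) *v y) \<bullet> y" for t y
    have qf_ge: "0 \<le> qf t y \<and> (norm y)^2 / (Mq * t) - Mi * (norm y)^2 \<le> qf t y" if t: "0 < t" "t \<le> 1" for t y
    proof -
      have Qtinv: "invertible (Qt B Q t)" by (rule pd_invertible[OF Qtpd[OF t]])
      have e: "qf t y = y \<bullet> (matrix_inv (Qt B Q t) *v y) - y \<bullet> (matrix_inv QI *v y)"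
        by (simp add: qf_def matrix_vector_mult_diff_rdistrib inner_diff_left inner_diff_right inner_commute)
      have mono: "y \<bullet> (matrix_inv QI *v y) \<le> y \<bullet> (matrix_inv (Qt B Q t) *v y)"
        by (rule inv_mono[OF Qtsym Qtinv Qtpsd[OF t] QIinv]) (use QIge t in auto)
      have low: "(norm y)^2 / (Mq * t) \<le> y \<bullet> (matrix_inv (Qt B Q t) *v y)"
        by (rule inv_lower[OF Qtsym Qtinv Qtpsd[OF t]]) (use Mq(1) t Qtup[OF t] in auto)
      have "y \<bullet> (matrix_inv QI *v y) \<le> norm y * norm (matrix_inv QI *v y)" by (rule norm_cauchy_schwarz)
      also have "\<dots> \<le> norm y * (Mi * norm y)" unfolding Mi_def by (intro mult_left_mono norm_mv) simp
      finally have up: "y \<bullet> (matrix_inv QI *v y) \<le> Mi * (norm y)^2" by (simp add: power2_eq_square algebra_simps)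
      show ?thesis using e mono low up by linarith
    qed
    obtain L where L: "0 < L" "\<And>t u. 0 \<le> t \<Longrightarrow> t \<le> 1 \<Longrightarrow> norm (Dt B Q t *v u - u) \<le> L * t * norm u"
      using Dt_bound[of B Q] QIinv unfolding QI_def by blast
    define G where "G = exp \<bar>trace B\<bar> * inverse ((2 * pi) ^ CARD('n)) * inverse (sqrt (det QI * m))"
    have G: "0 < G" unfolding G_def using dI m(1) by simp
    obtain C where C: "\<And>t X d Y U q P. 0 < t \<and> t \<le> 1 \<and> 0 \<le> X \<and> 1 / (1 + X) < d \<and> d - L * t * U \<le> Y \<and> 0 \<le> Y
          \<and> U \<le> X + d \<and> 0 \<le> U \<and> 0 \<le> q \<and> Y^2 / (Mq * t) - Mi * Y^2 \<le> q \<and> 0 \<le> P \<and> P \<le> G * sqrt ((1/t) ^ CARD('n))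
          \<Longrightarrow> P * exp (- q / 2) \<le> C * (1 + X) ^ CARD('n)"
      using scalar_main[OF G Mq(1) Mi L(1), of "CARD('n)"] by blast
    show ?thesis
    proof (intro exI[of _ C] allI impI)
      fix x u :: "real^'n" and t :: real
      assume h: "1 / (1 + norm x) < norm (x - u) \<and> 0 < t \<and> t \<le> 1"
      then have t: "0 < t" "t \<le> 1" by auto
      define y where "y = x - Dt B Q t *v u"
      define P where "P = inverse ((2 * pi) ^ CARD('n)) * inverse (sqrt (det QI * det (Qt B Q t))) * exp (t * trace B)"
      have P: "0 \<le> P \<and> P \<le> G * sqrt ((1/t) ^ CARD('n))"
        unfolding P_def G_def by (rule prefactor[OF dI m(1) t detQt[OF t]])
      have Y: "norm (x - u) - L * t * norm u \<le> norm y"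
      proof -
        have "y = (x - u) - (Dt B Q t *v u - u)" by (simp add: y_def)
        then have "norm (x - u) \<le> norm y + norm (Dt B Q t *v u - u)"
          using norm_triangle_ineq4[of y "- (Dt B Q t *v u - u)"] by (simp add: algebra_simps norm_minus_commute)
        then show ?thesis using L(2)[of t u] t by linarith
      qed
      have U: "norm u \<le> norm x + norm (x - u)"
        using norm_triangle_ineq4[of x "x - u"] by simp
      have main: "P * exp (- qf t y / 2) \<le> C * (1 + norm x) ^ CARD('n)"
        by (rule C) (use h t Y U qf_ge[OF t, of y] P in auto)
      have K: "KUO B Q t x u = (P * exp (- qf t y / 2)) * exp (- Rfun B Q x)"
        unfolding KUO_def P_def qf_def y_def QI_def by (simp add: algebra_simps)
      have "KUO B Q t x u \<le> (C * (1 + norm x) ^ CARD('n)) * exp (- Rfun B Q x)"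
        unfolding K by (rule mult_right_mono[OF main]) simp
      then show "KUO B Q t x u \<le> C * exp (- Rfun B Q x) * (1 + norm x) ^ CARD('n)"
        by (simp add: algebra_simps)
    qed
  qed
qed

end
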